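(* Let $\mathbb H(t)=4\arctan(e^t)$ and let $\lambda=q+ip$ with $q,p\in\mathbb{R}$, $q^2+p^2=1$, $p>0$, $\lambda\ne i$. Suppose $\Phi\in C^\infty(\mathbb{R}^2;\mathbb{C}^2)$ is parallel with respect to $(\mathbb H(x),\lambda)$ and $\sup_{(x,y)\in\ell}|\Phi(x,y)|<\infty$, where $\ell=\{(x,y)\in\mathbb{R}^2:-qx+py=0\}$. Then $\Phi\equiv0$.
   Context: Pauli matrices $\sigma_1=\begin{pmatrix}0&1\\1&0\end{pmatrix}$, $\sigma_2=\begin{pmatrix}0&-i\\ i&0\end{pmatrix}$, $\sigma_3=\begin{pmatrix}1&0\\0&-1\end{pmatrix}$. For $u\in C^\infty(\mathbb{R}^2)$, $\lambda\ne0$: $A=\frac i4\big((\lambda-\lambda^{-1}\cos u)\sigma_3-(\partial_xu-i\partial_yu)\sigma_2-\lambda^{-1}(\sin u)\sigma_1\big)$, $B=\frac14\big(-(\lambda+\lambda^{-1}\cos u)\sigma_3+(\partial_xu-i\partial_yu)\sigma_2-\lambda^{-1}(\sin u)\sigma_1\big)$; $\Phi$ is parallel with respect to $(u,\lambda)$ if $\partial_x\Phi=A\Phi$ and $\partial_y\Phi=B\Phi$ on $\mathbb{R}^2$. *)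

theory Defs
  imports "HOL-Analysis.Analysis"
begin

text \<open>Smoothness (C-infinity) of a function on the plane R^2 = real x real:
  f is differentiable everywhere, with partial derivatives fx, fy that are again smooth.
  (Coinductive, i.e. all iterated partial derivatives exist.)\<close>
coinductive smooth2 :: "(real \<times> real \<Rightarrow> 'b::real_normed_vector) \<Rightarrow> bool" where
  "(\<And>p. (f has_derivative (\<lambda>h. fst h *\<^sub>R fx p + snd h *\<^sub>R fy p)) (at p))
   \<Longrightarrow> smooth2 fx \<Longrightarrow> smooth2 fy \<Longrightarrow> smooth2 f"

definition sigma1 :: "complex^2^2" where
  "sigma1 = vector [vector [0, 1], vector [1, 0]]"
definition sigma2 :: "complex^2^2" where
  "sigma2 = vector [vector [0, -\<i>], vector [\<i>, 0]]"
definition sigma3 :: "complex^2^2" where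
  "sigma3 = vector [vector [1, 0], vector [0, -1]]"

definition cmat_scale :: "complex \<Rightarrow> complex^2^2 \<Rightarrow> complex^2^2" where
  "cmat_scale c M = (\<chi> i j. c * M $ i $ j)"

definition px :: "(real \<times> real \<Rightarrow> real) \<Rightarrow> real \<times> real \<Rightarrow> real" where
  "px u p = deriv (\<lambda>s. u (s, snd p)) (fst p)"
definition py :: "(real \<times> real \<Rightarrow> real) \<Rightarrow> real \<times> real \<Rightarrow> real" where
  "py u p = deriv (\<lambda>t. u (fst p, t)) (snd p)"

definition matA :: "(real \<times> real \<Rightarrow> real) \<Rightarrow> complex \<Rightarrow> real \<times> real \<Rightarrow> complex^2^2" where
  "matA u lam p = cmat_scale (\<i> / 4)
     (cmat_scale (lam - inverse lam * cos (u p)) sigma3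
      - cmat_scale (complex_of_real (px u p) - \<i> * complex_of_real (py u p)) sigma2
      - cmat_scale (inverse lam * sin (u p)) sigma1)"

definition matB :: "(real \<times> real \<Rightarrow> real) \<Rightarrow> complex \<Rightarrow> real \<times> real \<Rightarrow> complex^2^2" where
  "matB u lam p = cmat_scale (1 / 4)
     (- cmat_scale (lam + inverse lam * cos (u p)) sigma3
      + cmat_scale (complex_of_real (px u p) - \<i> * complex_of_real (py u p)) sigma2
      - cmat_scale (inverse lam * sin (u p)) sigma1)"

definition parallel :: "(real \<times> real \<Rightarrow> real) \<Rightarrow> complex \<Rightarrow> (real \<times> real \<Rightarrow> complex^2) \<Rightarrow> bool" where
  "parallel u lam \<Phi> \<longleftrightarrow>
     (\<forall>x y. ((\<lambda>s. \<Phi> (s, y)) has_vector_derivative (matA u lam (x, y) *v \<Phi> (x, y))) (at x)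
          \<and> ((\<lambda>t. \<Phi> (x, t)) has_vector_derivative (matB u lam (x, y) *v \<Phi> (x, y))) (at y))"

definition kink :: "real \<Rightarrow> real" where
  "kink t = 4 * arctan (exp t)"

end

theory Submission
  imports Defs
begin


lemma normsq_deriv:
  fixes f :: "real \<Rightarrow> 'a::real_inner"
  assumes "(f has_vector_derivative d) (at t)"
  shows "((\<lambda>t. f t \<bullet> f t) has_real_derivative 2 * (f t \<bullet> d)) (at t)"
proof -
  have "((\<lambda>t. f t \<bullet> f t) has_derivative (\<lambda>h. f t \<bullet> (h *\<^sub>R d) + (h *\<^sub>R d) \<bullet> f t)) (at t)"
    using assms unfolding has_vector_derivative_def by (intro has_derivative_inner)
  moreover have "(\<lambda>h. f t \<bullet> (h *\<^sub>R d) + (h *\<^sub>R d) \<bullet> f t) = (\<lambda>h. h * (2 * (f t \<bullet> d)))"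
    by (auto simp: inner_commute)
  ultimately show ?thesis by (simp add: has_field_derivative_def mult_commute_abs)
qed

lemma ode_unique:
  fixes f :: "real \<Rightarrow> 'a::real_inner"
  assumes d: "\<And>t. (f has_vector_derivative f' t) (at t)"
    and b: "\<And>t. norm (f' t) \<le> K * norm (f t)" and K: "K \<ge> 0" and z: "f t0 = 0"
  shows "f t = 0"
proof -
  have ib: "\<bar>f s \<bullet> f' s\<bar> \<le> K * (f s \<bullet> f s)" for s
  proof -
    have "\<bar>f s \<bullet> f' s\<bar> \<le> norm (f s) * norm (f' s)" by (rule Cauchy_Schwarz_ineq2)
    also have "\<dots> \<le> norm (f s) * (K * norm (f s))" by (intro mult_left_mono b) auto
    also have "\<dots> = K * (f s \<bullet> f s)" by (simp add: power2_norm_eq_inner[symmetric] power2_eq_square)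
    finally show ?thesis .
  qed
  have "f t \<bullet> f t = 0"
  proof (cases "t0 \<le> t")
    case True
    let ?g = "\<lambda>s. exp (- 2 * K * s) * (f s \<bullet> f s)"
    have "?g t \<le> ?g t0"
    proof (rule DERIV_nonpos_imp_nonincreasing[OF True])
      fix s
      have "(?g has_real_derivative (- 2 * K) * exp (- 2 * K * s) * (f s \<bullet> f s) + exp (- 2 * K * s) * (2 * (f s \<bullet> f' s))) (at s)"
        by (auto intro!: derivative_eq_intros normsq_deriv d)
      moreover have "(- 2 * K) * exp (- 2 * K * s) * (f s \<bullet> f s) + exp (- 2 * K * s) * (2 * (f s \<bullet> f' s)) \<le> 0"
      proof -
        have "f s \<bullet> f' s \<le> K * (f s \<bullet> f s)" using ib[of s] by linarith
        hence "2 * (f s \<bullet> f' s) - 2*K * (f s \<bullet> f s) \<le> 0" by linarith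
        hence "exp (- 2 * K * s) * (2 * (f s \<bullet> f' s) - 2*K * (f s \<bullet> f s)) \<le> 0"
          by (simp add: mult_nonneg_nonpos)
        thus ?thesis by (simp add: algebra_simps)
      qed
      ultimately show "\<exists>y. DERIV ?g s :> y \<and> y \<le> 0" by blast
    qed
    hence "exp (-2*K*t) * (f t \<bullet> f t) \<le> 0" using z by simp
    hence "f t \<bullet> f t \<le> 0" by (simp add: mult_le_0_iff)
    thus ?thesis by (meson inner_ge_zero order_antisym)
  next
    case False
    hence le: "t \<le> t0" by simp
    let ?g = "\<lambda>s. exp (2 * K * s) * (f s \<bullet> f s)"
    have "?g t \<le> ?g t0"
    proof (rule DERIV_nonneg_imp_nondecreasing[OF le])
      fix s
      have "(?g has_real_derivative (2*K) * exp (2 * K * s) * (f s \<bullet> f s) + exp (2 * K * s) * (2 * (f s \<bullet> f' s))) (at s)"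
        by (auto intro!: derivative_eq_intros normsq_deriv d)
      moreover have "(2*K) * exp (2 * K * s) * (f s \<bullet> f s) + exp (2 * K * s) * (2 * (f s \<bullet> f' s)) \<ge> 0"
      proof -
        have "- (f s \<bullet> f' s) \<le> K * (f s \<bullet> f s)" using ib[of s] by linarith
        hence "2 * (f s \<bullet> f' s) + 2*K * (f s \<bullet> f s) \<ge> 0" by linarith
        hence "exp (2 * K * s) * (2 * (f s \<bullet> f' s) + 2*K * (f s \<bullet> f s)) \<ge> 0"
          by simp
        thus ?thesis by (simp add: algebra_simps)
      qed
      ultimately show "\<exists>y. DERIV ?g s :> y \<and> y \<ge> 0" by blast
    qed
    hence "exp (2*K*t) * (f t \<bullet> f t) \<le> 0" using z by simp
    hence "f t \<bullet> f t \<le> 0" by (simp add: mult_le_0_iff)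
    thus ?thesis by (meson inner_ge_zero order_antisym)
  qed
  thus ?thesis by simp
qed



definition SS :: "real \<Rightarrow> real" where "SS x = 2 * exp x / (1 + (exp x)\<^sup>2)"
definition TT :: "real \<Rightarrow> real" where "TT x = ((exp x)\<^sup>2 - 1) / (1 + (exp x)\<^sup>2)"

lemma kink_deriv: "(kink has_real_derivative 2 * SS x) (at x)"
proof -
  have "(kink has_real_derivative 4 * (inverse (1 + (exp x)\<^sup>2) * exp x)) (at x)"
    unfolding kink_def[abs_def] by (auto intro!: derivative_eq_intros)
  thus ?thesis by (simp add: SS_def field_simps)
qed

lemma SS_TT: "(SS x)\<^sup>2 + (TT x)\<^sup>2 = 1"
proof -
  have p: "1 + (exp x)\<^sup>2 > 0" by (simp add: add_pos_nonneg)
  show ?thesis unfolding SS_def TT_def using p apply (simp add: divide_simps) by algebra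
qed

lemma sin2: "sin (2 * arctan (exp x)) = SS x" and cos2: "cos (2 * arctan (exp x)) = - TT x"
proof -
  have p: "1 + (exp x)\<^sup>2 > 0" by (simp add: add_pos_nonneg)
  have sq: "(sqrt (1 + (exp x)\<^sup>2))\<^sup>2 = 1 + (exp x)\<^sup>2" using p by simp
  have nz: "sqrt (1 + (exp x)\<^sup>2) \<noteq> 0" using p by simp
  have "sin (arctan (exp x)) * cos (arctan (exp x)) = exp x / (1 + (exp x)\<^sup>2)"
    unfolding sin_arctan cos_arctan using sq nz by (simp add: field_simps power2_eq_square[symmetric])
  then show "sin (2 * arctan (exp x)) = SS x"
    unfolding sin_double SS_def by (simp add: field_simps)
  show "cos (2 * arctan (exp x)) = - TT x"
    unfolding cos_double sin_arctan cos_arctan TT_def using sq nz p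
    by (simp add: field_simps power_divide)
qed

lemma sin_kink: "sin (kink x) = - 2 * SS x * TT x" and cos_kink: "cos (kink x) = 1 - 2 * (SS x)\<^sup>2"
proof -
  have k: "kink x = 2 * (2 * arctan (exp x))" by (simp add: kink_def)
  show "sin (kink x) = - 2 * SS x * TT x" unfolding k sin_double[of "2 * arctan (exp x)"] sin2 cos2 by simp
  show "cos (kink x) = 1 - 2 * (SS x)\<^sup>2" unfolding k cos_double[of "2 * arctan (exp x)"] sin2 cos2 using SS_TT[of x] by simp
qed

lemma SS_deriv: "(SS has_real_derivative - SS x * TT x) (at x)"
proof -
  have p: "1 + (exp x)\<^sup>2 \<noteq> 0" by (metis add_pos_nonneg zero_less_one zero_le_power2 less_irrefl)
  show ?thesis unfolding SS_def[abs_def] TT_def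
    apply (rule derivative_eq_intros refl | simp add: p)+
    using p apply (simp add: divide_simps) by algebra
qed

lemma TT_deriv: "(TT has_real_derivative (SS x)\<^sup>2) (at x)"
proof -
  have p: "1 + (exp x)\<^sup>2 \<noteq> 0" by (metis add_pos_nonneg zero_less_one zero_le_power2 less_irrefl)
  show ?thesis unfolding SS_def TT_def[abs_def]
    apply (rule derivative_eq_intros refl | simp add: p)+
    using p apply (simp add: divide_simps) by algebra
qed

lemma SS_bound: "\<bar>SS x\<bar> \<le> 1" and TT_bound: "\<bar>TT x\<bar> \<le> 1"
  using SS_TT[of x] abs_square_le_1[of "SS x"] abs_square_le_1[of "TT x"]
  by (smt (verit) zero_le_power2)+



lemma px_kink: "px (\<lambda>(x, y). kink x) (x, y) = 2 * SS x"
  unfolding px_def using kink_deriv[of x] by (simp add: DERIV_imp_deriv)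
lemma py_kink: "py (\<lambda>(x, y). kink x) (x, y) = 0"
  unfolding py_def by (simp add: DERIV_imp_deriv)

lemma inv_lam: assumes "q\<^sup>2 + p\<^sup>2 = 1" shows "inverse (Complex q p) = Complex q (- p)"
  using assms by (simp add: inverse_complex.ctr)

lemma line_M:
  fixes p q :: real
  assumes pq: "q\<^sup>2 + p\<^sup>2 = 1"
  defines "u \<equiv> \<lambda>(x, y). kink x"
  shows "(p *\<^sub>R (matA u (Complex q p) (x,y) *v v) + q *\<^sub>R (matB u (Complex q p) (x,y) *v v)) $ 1
     = - (of_real (TT x))\<^sup>2 / 2 * v $ 1 + of_real (SS x) * (of_real (TT x) - Complex p q) / 2 * v $ 2"
   and "(p *\<^sub>R (matA u (Complex q p) (x,y) *v v) + q *\<^sub>R (matB u (Complex q p) (x,y) *v v)) $ 2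
     = of_real (SS x) * (of_real (TT x) + Complex p q) / 2 * v $ 1 + (of_real (TT x))\<^sup>2 / 2 * v $ 2"
proof -
  have u: "u (x, y) = kink x" by (simp add: u_def)
  have e1: "(complex_of_real q)^2 + (complex_of_real p)^2 = 1"
    using arg_cong[OF pq, of complex_of_real] by simp
  have e2: "(complex_of_real (SS x))^2 + (complex_of_real (TT x))^2 = 1"
    using arg_cong[OF SS_TT[of x], of complex_of_real] by simp
  have i2: "\<i>^2 = (-1::complex)" by simp
  have cq: "Complex q p = of_real q + \<i> * of_real p" "Complex q (-p) = of_real q - \<i> * of_real p"
     "Complex p q = of_real p + \<i> * of_real q"
    by (simp_all add: complex_eq_iff)
  show "(p *\<^sub>R (matA u (Complex q p) (x,y) *v v) + q *\<^sub>R (matB u (Complex q p) (x,y) *v v)) $ 1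
     = - (of_real (TT x))\<^sup>2 / 2 * v $ 1 + of_real (SS x) * (of_real (TT x) - Complex p q) / 2 * v $ 2"
    apply (simp add: matA_def matB_def cmat_scale_def sigma1_def sigma2_def sigma3_def matrix_vector_mult_def sum_2
        u px_kink[unfolded u_def[symmetric]] py_kink[unfolded u_def[symmetric]] sin_kink cos_kink inv_lam[OF pq])
    unfolding cq scaleR_conv_of_real using e1 e2 i2 by algebra
  show "(p *\<^sub>R (matA u (Complex q p) (x,y) *v v) + q *\<^sub>R (matB u (Complex q p) (x,y) *v v)) $ 2
     = of_real (SS x) * (of_real (TT x) + Complex p q) / 2 * v $ 1 + (of_real (TT x))\<^sup>2 / 2 * v $ 2"
    apply (simp add: matA_def matB_def cmat_scale_def sigma1_def sigma2_def sigma3_def matrix_vector_mult_def sum_2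
        u px_kink[unfolded u_def[symmetric]] py_kink[unfolded u_def[symmetric]] sin_kink cos_kink inv_lam[OF pq])
    unfolding cq scaleR_conv_of_real using e1 e2 i2 by algebra
qed


lemma det_const:
  fixes f1 f2 g1 g2 m11 m12 m21 :: "real \<Rightarrow> complex"
  assumes "\<And>t. (f1 has_vector_derivative (m11 t * f1 t + m12 t * f2 t)) (at t)"
    and "\<And>t. (f2 has_vector_derivative (m21 t * f1 t - m11 t * f2 t)) (at t)"
    and "\<And>t. (g1 has_vector_derivative (m11 t * g1 t + m12 t * g2 t)) (at t)"
    and "\<And>t. (g2 has_vector_derivative (m21 t * g1 t - m11 t * g2 t)) (at t)"
  obtains c where "\<And>t. f1 t * g2 t - f2 t * g1 t = c"
proof -
  have d: "((\<lambda>t. f1 t * g2 t - f2 t * g1 t) has_vector_derivative 0) (at t within UNIV)" for t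
  proof -
    have "((\<lambda>t. f1 t * g2 t - f2 t * g1 t) has_vector_derivative
       (f1 t * (m21 t * g1 t - m11 t * g2 t) + (m11 t * f1 t + m12 t * f2 t) * g2 t
        - (f2 t * (m11 t * g1 t + m12 t * g2 t) + (m21 t * f1 t - m11 t * f2 t) * g1 t))) (at t)"
      by (intro derivative_intros assms)
    moreover have "f1 t * (m21 t * g1 t - m11 t * g2 t) + (m11 t * f1 t + m12 t * f2 t) * g2 t
        - (f2 t * (m11 t * g1 t + m12 t * g2 t) + (m21 t * f1 t - m11 t * f2 t) * g1 t) = 0"
      by (simp add: algebra_simps)
    ultimately show ?thesis by simp
  qed
  then obtain c where "\<And>t. t \<in> UNIV \<Longrightarrow> f1 t * g2 t - f2 t * g1 t = c"
    using has_vector_derivative_zero_constant[of UNIV "\<lambda>t. f1 t * g2 t - f2 t * g1 t"] d by blast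
  then show ?thesis using that by blast
qed

lemma ofr_deriv: "(f has_real_derivative D) (at t) \<Longrightarrow> ((\<lambda>t. complex_of_real (f t)) has_vector_derivative of_real D) (at t)"
  by (rule has_vector_derivative_of_real)

context
  fixes p q :: real
  assumes pq: "q\<^sup>2 + p\<^sup>2 = 1"
begin

definition "nu = Complex p (- q)"
definition "m11 t = - (complex_of_real (TT (p*t)))\<^sup>2 / 2"
definition "m12 t = complex_of_real (SS (p*t)) * (complex_of_real (TT (p*t)) - Complex p q) / 2"
definition "m21 t = complex_of_real (SS (p*t)) * (complex_of_real (TT (p*t)) + Complex p q) / 2"

lemma SSc: "((\<lambda>t. complex_of_real (SS (p*t))) has_vector_derivative - of_real p * of_real (SS (p*t)) * of_real (TT (p*t))) (at t)"
proof -
  have "((\<lambda>t. SS (p*t)) has_real_derivative - SS (p*t) * TT (p*t) * p) (at t)"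
    by (rule DERIV_chain2[OF SS_deriv]) (auto intro!: derivative_eq_intros)
  from ofr_deriv[OF this] show ?thesis by (simp add: mult.commute mult.left_commute)
qed

lemma TTc: "((\<lambda>t. complex_of_real (TT (p*t))) has_vector_derivative of_real p * (of_real (SS (p*t)))\<^sup>2) (at t)"
proof -
  have "((\<lambda>t. TT (p*t)) has_real_derivative (SS (p*t))\<^sup>2 * p) (at t)"
    by (rule DERIV_chain2[OF TT_deriv]) (auto intro!: derivative_eq_intros)
  from ofr_deriv[OF this] show ?thesis by (simp add: mult.commute)
qed

lemma expc: "((\<lambda>t. complex_of_real (exp (c*t))) has_vector_derivative of_real c * of_real (exp (c*t))) (at t)"
proof -
  have "((\<lambda>t. exp (c*t)) has_real_derivative exp (c*t) * c) (at t)"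
    by (auto intro!: derivative_eq_intros)
  from ofr_deriv[OF this] show ?thesis by (simp add: mult.commute)
qed

lemma alg_facts:
  "(complex_of_real q)^2 + (complex_of_real p)^2 = 1"
  "(complex_of_real (SS x))^2 + (complex_of_real (TT x))^2 = 1"
  "\<i>^2 = (-1::complex)"
  "Complex p q = of_real p + \<i> * of_real q"
  "nu = of_real p - \<i> * of_real q"
  using arg_cong[OF pq, of complex_of_real] arg_cong[OF SS_TT[of x], of complex_of_real]
  by (simp_all add: complex_eq_iff nu_def)

lemma psip1: "((\<lambda>t. of_real (exp (-(1/2)*t)) * (nu + of_real (TT (p*t)))) has_vector_derivative
   m11 t * (of_real (exp (-(1/2)*t)) * (nu + of_real (TT (p*t)))) + m12 t * (of_real (exp (-(1/2)*t)) * (- of_real (SS (p*t))))) (at t)"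
proof -
  note d = has_vector_derivative_mult[OF expc has_vector_derivative_add[OF has_vector_derivative_const TTc]]
  show ?thesis
    apply (rule has_vector_derivative_eq_rhs[OF d])
    unfolding m11_def m12_def alg_facts(4,5) using alg_facts(1,3) alg_facts(2)[of "p*t"]
    apply (simp add: field_simps) by algebra
qed


lemma psip2: "((\<lambda>t. of_real (exp (-(1/2)*t)) * (- of_real (SS (p*t)))) has_vector_derivative
   m21 t * (of_real (exp (-(1/2)*t)) * (nu + of_real (TT (p*t)))) - m11 t * (of_real (exp (-(1/2)*t)) * (- of_real (SS (p*t))))) (at t)"
proof -
  note d = has_vector_derivative_mult[OF expc has_vector_derivative_minus[OF SSc]]
  show ?thesis
    apply (rule has_vector_derivative_eq_rhs[OF d])
    unfolding m11_def m21_def alg_facts(4,5) using alg_facts(1,3) alg_facts(2)[of "p*t"]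
    apply (simp add: field_simps) by algebra
qed

lemma psim1: "((\<lambda>t. of_real (exp ((1/2)*t)) * of_real (SS (p*t))) has_vector_derivative
   m11 t * (of_real (exp ((1/2)*t)) * of_real (SS (p*t))) + m12 t * (of_real (exp ((1/2)*t)) * (of_real (TT (p*t)) - nu))) (at t)"
proof -
  note d = has_vector_derivative_mult[OF expc SSc]
  show ?thesis
    apply (rule has_vector_derivative_eq_rhs[OF d])
    unfolding m11_def m12_def alg_facts(4,5) using alg_facts(1,3) alg_facts(2)[of "p*t"]
    apply (simp add: field_simps) by algebra
qed

lemma psim2: "((\<lambda>t. of_real (exp ((1/2)*t)) * (of_real (TT (p*t)) - nu)) has_vector_derivative
   m21 t * (of_real (exp ((1/2)*t)) * of_real (SS (p*t))) - m11 t * (of_real (exp ((1/2)*t)) * (of_real (TT (p*t)) - nu))) (at t)"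
proof -
  note d = has_vector_derivative_mult[OF expc has_vector_derivative_diff[OF TTc has_vector_derivative_const]]
  show ?thesis
    apply (rule has_vector_derivative_eq_rhs[OF d])
    unfolding m11_def m21_def alg_facts(4,5) using alg_facts(1,3) alg_facts(2)[of "p*t"]
    apply (simp add: field_simps) by algebra
qed

end


lemma exp_bound_zero:
  fixes c :: complex and a K :: real
  assumes "a \<noteq> 0" and b: "\<And>t. cmod c \<le> K * exp (a * t)"
  shows "c = 0"
proof (rule ccontr)
  assume "c \<noteq> 0"
  hence c: "cmod c > 0" by simp
  have "cmod c \<le> K" using b[of 0] by simp
  hence "K > 0" using c by linarith
  define t where "t = ln (cmod c / (2*K)) / a"
  have "exp (a * t) = cmod c / (2*K)" using assms(1) c \<open>K>0\<close> by (simp add: t_def)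
  with b[of t] have "cmod c \<le> K * (cmod c / (2*K))" by simp
  also have "\<dots> = cmod c / 2" using \<open>K>0\<close> by simp
  finally show False using c by simp
qed

lemma nu_norm: "q\<^sup>2 + p\<^sup>2 = 1 \<Longrightarrow> cmod (nu p q) = 1"
  by (simp add: nu_def cmod_def)

lemma aux1: fixes a b E S T n c :: complex
  shows "a * (E * (- S)) - b * (E * (n + T)) = c \<Longrightarrow> c = 0 \<Longrightarrow> E * (S * a + (n + T) * b) = 0"
  by algebra
lemma aux2: fixes a b E S T n c :: complex
  shows "a * (E * (T - n)) - b * (E * S) = c \<Longrightarrow> c = 0 \<Longrightarrow> E * ((T - n) * a - S * b) = 0"
  by (auto simp: algebra_simps)

theorem corollary3p10:
  fixes q p :: real and \<Phi> :: "real \<times> real \<Rightarrow> complex^2"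
  assumes "q\<^sup>2 + p\<^sup>2 = 1" and "p > 0" and "Complex q p \<noteq> \<i>"
    and "smooth2 \<Phi>"
    and "parallel (\<lambda>(x, y). kink x) (Complex q p) \<Phi>"
    and "\<exists>C. \<forall>x y. - q * x + p * y = 0 \<longrightarrow> norm (\<Phi> (x, y)) \<le> C"
  shows "\<forall>z. \<Phi> z = 0"
proof -
  note pq = assms(1)
  define u where "u = (\<lambda>(x::real, y::real). kink x)"
  define lam where "lam = Complex q p"
  obtain fx fy where fd: "\<And>z. (\<Phi> has_derivative (\<lambda>h. fst h *\<^sub>R fx z + snd h *\<^sub>R fy z)) (at z)"
    using assms(4) by (cases rule: smooth2.cases) auto
  have parA: "\<And>x y. ((\<lambda>s. \<Phi> (s, y)) has_vector_derivative (matA u lam (x, y) *v \<Phi> (x, y))) (at x)"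
   and parB: "\<And>x y. ((\<lambda>t. \<Phi> (x, t)) has_vector_derivative (matB u lam (x, y) *v \<Phi> (x, y))) (at y)"
    using assms(5) unfolding parallel_def u_def lam_def by auto
  have fxe: "fx (x,y) = matA u lam (x,y) *v \<Phi> (x,y)" for x y
  proof -
    have h1: "((\<lambda>s. (s, y)) has_derivative (\<lambda>h. (h, 0))) (at x)"
      by (auto intro!: derivative_eq_intros)
    have "((\<lambda>s. \<Phi> (s, y)) has_vector_derivative fx (x,y)) (at x)"
      using has_derivative_compose[OF h1 fd] by (simp add: has_vector_derivative_def)
    thus ?thesis using parA vector_derivative_unique_at by blast
  qed
  have fye: "fy (x,y) = matB u lam (x,y) *v \<Phi> (x,y)" for x y
  proof -
    have h1: "((\<lambda>s. (x, s)) has_derivative (\<lambda>h. (0, h))) (at y)"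
      by (auto intro!: derivative_eq_intros)
    have "((\<lambda>s. \<Phi> (x, s)) has_vector_derivative fy (x,y)) (at y)"
      using has_derivative_compose[OF h1 fd] by (simp add: has_vector_derivative_def)
    thus ?thesis using parB vector_derivative_unique_at by blast
  qed
  define \<phi> where "\<phi> t = \<Phi> (p*t, q*t)" for t
  have phid: "(\<phi> has_vector_derivative (p *\<^sub>R (matA u lam (p*t,q*t) *v \<phi> t) + q *\<^sub>R (matB u lam (p*t,q*t) *v \<phi> t))) (at t)" for t
  proof -
    have h1: "((\<lambda>s. (p * s, q * s)) has_derivative (\<lambda>h. (p*h, q*h))) (at t)"
      by (auto intro!: derivative_eq_intros)
    have "(\<phi> has_derivative (\<lambda>h. (p*h) *\<^sub>R fx (p*t,q*t) + (q*h) *\<^sub>R fy (p*t,q*t))) (at t)"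
      using has_derivative_compose[OF h1 fd] by (simp add: \<phi>_def[abs_def])
    moreover have "(\<lambda>h. (p*h) *\<^sub>R fx (p*t,q*t) + (q*h) *\<^sub>R fy (p*t,q*t)) = (\<lambda>h. h *\<^sub>R (p *\<^sub>R fx (p*t,q*t) + q *\<^sub>R fy (p*t,q*t)))"
      by (auto simp: algebra_simps)
    ultimately show ?thesis by (simp add: has_vector_derivative_def fxe fye \<phi>_def)
  qed
  have comp: "((\<lambda>t. \<phi> t $ i) has_vector_derivative ((p *\<^sub>R (matA u lam (p*t,q*t) *v \<phi> t) + q *\<^sub>R (matB u lam (p*t,q*t) *v \<phi> t)) $ i)) (at t)" for t i
    by (rule bounded_linear.has_vector_derivative[OF bounded_linear_vec_nth phid])
  have d1: "((\<lambda>t. \<phi> t $ 1) has_vector_derivative (m11 p t * \<phi> t $ 1 + m12 p q t * \<phi> t $ 2)) (at t)" for t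
    using comp[of 1 t] unfolding lam_def u_def line_M(1)[OF pq]
    by (rule has_vector_derivative_eq_rhs) (simp add: m11_def[OF pq] m12_def[OF pq] field_simps)
  have d2: "((\<lambda>t. \<phi> t $ 2) has_vector_derivative (m21 p q t * \<phi> t $ 1 - m11 p t * \<phi> t $ 2)) (at t)" for t
    using comp[of 2 t] unfolding lam_def u_def line_M(2)[OF pq]
    by (rule has_vector_derivative_eq_rhs) (simp add: m11_def[OF pq] m21_def[OF pq] field_simps)

  obtain C where C: "\<And>x y. - q * x + p * y = 0 \<Longrightarrow> norm (\<Phi> (x, y)) \<le> C" using assms(6) by blast
  have phib: "cmod (\<phi> t $ i) \<le> C" for t i
    using Finite_Cartesian_Product.norm_nth_le[of "\<phi> t" i] C[of "p*t" "q*t"] unfolding \<phi>_def by (simp add: algebra_simps)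
  have C0: "C \<ge> 0" using phib[of 0 1] norm_ge_zero order_trans by blast
  have nn: "cmod (nu p q) = 1" using nu_norm[OF pq] .
  obtain c1 where c1: "\<And>t. \<phi> t $ 1 * (of_real (exp (-(1/2)*t)) * (- of_real (SS (p*t))))
      - \<phi> t $ 2 * (of_real (exp (-(1/2)*t)) * (nu p q + of_real (TT (p*t)))) = c1"
    using det_const[OF d1 d2 psip1[OF pq] psip2[OF pq]] by blast
  obtain c2 where c2: "\<And>t. \<phi> t $ 1 * (of_real (exp ((1/2)*t)) * (of_real (TT (p*t)) - nu p q))
      - \<phi> t $ 2 * (of_real (exp ((1/2)*t)) * of_real (SS (p*t))) = c2"
    using det_const[OF d1 d2 psim1[OF pq] psim2[OF pq]] by blast
  have "c1 = 0"
  proof (rule exp_bound_zero[of "-(1/2)" c1 "3*C"])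
    fix t
    have "cmod c1 \<le> cmod (\<phi> t $ 1) * (exp (-(1/2)*t) * \<bar>SS (p*t)\<bar>)
        + cmod (\<phi> t $ 2) * (exp (-(1/2)*t) * cmod (nu p q + of_real (TT (p*t))))"
      unfolding c1[of t, symmetric] by (rule order_trans[OF norm_triangle_ineq4]) (simp add: norm_mult)
    also have "\<dots> \<le> C * (exp (-(1/2)*t) * 1) + C * (exp (-(1/2)*t) * 2)"
    proof (intro add_mono mult_mono mult_left_mono phib)
      show "cmod (nu p q + of_real (TT (p*t))) \<le> 2"
        using norm_triangle_ineq[of "nu p q" "of_real (TT (p*t))"] nn TT_bound[of "p*t"] by simp
    qed (use SS_bound C0 in auto)
    finally show "cmod c1 \<le> 3 * C * exp (-(1/2)*t)" by (simp add: algebra_simps)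
  qed simp
  have "c2 = 0"
  proof (rule exp_bound_zero[of "1/2" c2 "3*C"])
    fix t
    have "cmod c2 \<le> cmod (\<phi> t $ 1) * (exp ((1/2)*t) * cmod (of_real (TT (p*t)) - nu p q))
        + cmod (\<phi> t $ 2) * (exp ((1/2)*t) * \<bar>SS (p*t)\<bar>)"
      unfolding c2[of t, symmetric] by (rule order_trans[OF norm_triangle_ineq4]) (simp add: norm_mult)
    also have "\<dots> \<le> C * (exp ((1/2)*t) * 2) + C * (exp ((1/2)*t) * 1)"
    proof (intro add_mono mult_mono mult_left_mono phib)
      show "cmod (of_real (TT (p*t)) - nu p q) \<le> 2"
        using norm_triangle_ineq4[of "of_real (TT (p*t))" "nu p q"] nn TT_bound[of "p*t"] by simp
    qed (use SS_bound C0 in auto)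
    finally show "cmod c2 \<le> 3 * C * exp ((1/2)*t)" by (simp add: algebra_simps)
  qed simp
  have nu2: "1 - (nu p q)\<^sup>2 \<noteq> 0"
  proof
    assume "1 - (nu p q)\<^sup>2 = 0"
    hence "p\<^sup>2 - q\<^sup>2 = 1" "p * q = 0"
      by (simp_all add: nu_def[OF pq] complex_eq_iff power2_eq_square)
    hence q0: "q = 0" using assms(2) by auto
    hence "p\<^sup>2 = 1" using pq by simp
    hence "p = 1" using assms(2) power2_eq_1_iff[of p] by auto
    with q0 show False using assms(3) by (simp add: complex_eq_iff)
  qed
  have line0: "\<phi> t = 0" for t
  proof -
    define E1 where "E1 = complex_of_real (exp (-(1/2)*t))"
    define E2 where "E2 = complex_of_real (exp ((1/2)*t))"
    have "E1 \<noteq> 0" "E2 \<noteq> 0" by (simp_all add: E1_def E2_def)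
    have "E1 * (of_real (SS (p*t)) * \<phi> t $ 1 + (nu p q + of_real (TT (p*t))) * \<phi> t $ 2) = 0"
      using c1[of t] \<open>c1 = 0\<close> unfolding E1_def by (rule aux1)
    hence e1: "of_real (SS (p*t)) * \<phi> t $ 1 + (nu p q + of_real (TT (p*t))) * \<phi> t $ 2 = 0"
      using \<open>E1 \<noteq> 0\<close> by simp
    have "E2 * ((of_real (TT (p*t)) - nu p q) * \<phi> t $ 1 - of_real (SS (p*t)) * \<phi> t $ 2) = 0"
      using c2[of t] \<open>c2 = 0\<close> unfolding E2_def by (rule aux2)
    hence e2: "(of_real (TT (p*t)) - nu p q) * \<phi> t $ 1 - of_real (SS (p*t)) * \<phi> t $ 2 = 0"
      using \<open>E2 \<noteq> 0\<close> by simp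
    have st: "(complex_of_real (SS (p*t)))^2 + (complex_of_real (TT (p*t)))^2 = 1"
      using alg_facts(2)[OF pq, of "p*t"] .
    have "(1 - (nu p q)\<^sup>2) * \<phi> t $ 1 = 0" using e1 e2 st by algebra
    moreover have "(1 - (nu p q)\<^sup>2) * \<phi> t $ 2 = 0" using e1 e2 st by algebra
    ultimately show ?thesis using nu2 by (simp add: vec_eq_iff forall_2)
  qed
  show ?thesis
  proof
    fix z :: "real \<times> real"
    obtain x y where z: "z = (x, y)" by (cases z)
    define Bx where "Bx = matB u lam (x, 0)"
    have Bc: "matB u lam (x, s) = Bx" for s
      unfolding Bx_def matB_def u_def using px_kink[of x s] py_kink[of x s] px_kink[of x 0] py_kink[of x 0] by simp
    obtain K where K: "K > 0" "\<And>v. norm (Bx *v v) \<le> norm v * K"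
      using bounded_linear.pos_bounded[OF matrix_vector_mul_bounded_linear[of Bx]] by blast
    have hd: "((\<lambda>s. \<Phi> (x, s)) has_vector_derivative Bx *v \<Phi> (x, s)) (at s)" for s
      using parB[of x s] Bc by simp
    have hb: "norm (Bx *v \<Phi> (x, s)) \<le> K * norm (\<Phi> (x, s))" for s using K(2) by (simp add: mult.commute)
    have h0: "\<Phi> (x, q * (x / p)) = 0" using line0[of "x/p"] assms(2) by (simp add: \<phi>_def)
    have h: "\<Phi> (x, s) = 0" for s
      using ode_unique[of "\<lambda>s. \<Phi> (x, s)" "\<lambda>s. Bx *v \<Phi> (x, s)" K "q * (x / p)" s] hd hb h0 K(1) by simp
    thus "\<Phi> z = 0" by (simp add: z)
  qed
qed

end
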